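(* Let $\mathcal{X}\subseteq\mathbb{R}^n$ be a nonempty closed convex set with Euclidean projection $\Pi_{\mathcal{X}}$, let $\Theta\subseteq\mathbb{R}^m$, and let $f:\mathbb{R}^n\times\mathbb{R}^m\to\mathbb{R}$ be differentiable and convex in its first argument. Assume: (A1) there is $G>0$ with $|f(x,\theta)-f(y,\theta)|\le G\|x-y\|$ for all $x,y\in\mathcal{X}$, $\theta\in\Theta$; (A2) there is $L>0$ with $f(y,\theta)\le f(x,\theta)+\nabla_x f(x,\theta)^T(y-x)+\frac{L}{2}\|y-x\|^2$ for all $x,y\in\mathcal{X}$, $\theta\in\Theta$; (A3) there is $\lambda>0$ with $f(y,\theta)\ge f(x,\theta)+\nabla_x f(x,\theta)^T(y-x)+\frac{\lambda}{2}\|y-x\|^2$ for all $x,y\in\mathcal{X}$, $\theta\in\Theta$; (A4) there is $C_\theta>0$ with $\|\nabla_x f(x,\theta_1)-\nabla_x f(x,\theta_2)\|\le C_\theta\|\theta_1-\theta_2\|$ for all $x\in\mathcal{X}$, $\theta_1,\theta_2\in\Theta$. Let $\theta_1,\dots,\theta_T\in\Theta$ be a sequence of parameters and, for $t=2,\dots,T$, let $\hat\theta_t\in\Theta$ be a prediction of $\theta_t$ made from $\theta_1,\dots,\theta_{t-1}$. Let $\eta>0$, $x_1\in\mathcal{X}$, and define (online predictive gradient descent) $x_{t+1}=\Pi_{\mathcal{X}}\big(x_t-\eta\nabla_x f(x_t,\hat\theta_{t+1})\big)$ for $t=1,\dots,T-1$. If $\eta\le 1/L$, then with $C_{\eta,\lambda}=\sqrt{1-\frac{2\lambda\eta}{1+\eta\lambda}}<1$,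 $$\mathbf{Reg}_D(\{x_t\})\le \frac{G\|x_1-x_1^\ast\|}{1-C_{\eta,\lambda}}+\frac{G\,C_{\eta,\lambda}}{1-C_{\eta,\lambda}}\mathcal{P}^\ast+\frac{G\eta C_\theta}{1-C_{\eta,\lambda}}P^\theta .$$
   Context: Write $f_t(x)=f(x,\theta_t)$ and $x_t^\ast=\arg\min_{x\in\mathcal{X}}f(x,\theta_t)$. The dynamic regret is $\mathbf{Reg}_D(\{x_t\})=\sum_{t=1}^T\big(f(x_t,\theta_t)-\min_{x\in\mathcal{X}}f(x,\theta_t)\big)$. The path length is $\mathcal{P}^\ast=\sum_{t=1}^{T-1}\|x_t^\ast-x_{t+1}^\ast\|$, and the parameter prediction regularity is $P^\theta=\sum_{t=2}^T\|\theta_t-\hat\theta_t\|$. All norms are Euclidean. *)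

theory Defs
  imports "HOL-Analysis.Analysis"
begin

text \<open>Minimizer of g over X (x^* = argmin_{x in X} g x); unique under strong convexity.\<close>
definition argmin_on :: "'a set \<Rightarrow> ('a \<Rightarrow> real) \<Rightarrow> 'a" where
  "argmin_on X g = (SOME x. x \<in> X \<and> (\<forall>y\<in>X. g x \<le> g y))"

definition dyn_regret ::
  "'a set \<Rightarrow> ('a \<Rightarrow> 'b \<Rightarrow> real) \<Rightarrow> (nat \<Rightarrow> 'b) \<Rightarrow> (nat \<Rightarrow> 'a) \<Rightarrow> nat \<Rightarrow> real" where
  "dyn_regret X f \<theta> x T = (\<Sum>t=1..T. f (x t) (\<theta> t) - Inf ((\<lambda>y. f y (\<theta> t)) ` X))"

definition path_length ::
  "('a::real_normed_vector) set \<Rightarrow> ('a \<Rightarrow> 'b \<Rightarrow> real) \<Rightarrow> (nat \<Rightarrow> 'b) \<Rightarrow> nat \<Rightarrow> real" where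
  "path_length X f \<theta> T =
     (\<Sum>t\<in>{1..<T}. norm (argmin_on X (\<lambda>y. f y (\<theta> t)) - argmin_on X (\<lambda>y. f y (\<theta> (Suc t)))))"

definition pred_regularity ::
  "(nat \<Rightarrow> 'b::real_normed_vector) \<Rightarrow> (nat \<Rightarrow> 'b) \<Rightarrow> nat \<Rightarrow> real" where
  "pred_regularity \<theta> \<theta>h T = (\<Sum>t=2..T. norm (\<theta> t - \<theta>h t))"

end

theory Submission
  imports Defs
begin

lemma opt_cond:
  fixes \<phi> :: "'a::real_inner \<Rightarrow> real"
  assumes cX: "convex X" and z: "z \<in> X" and v: "v \<in> X" and zmin: "\<forall>w\<in>X. \<phi> z \<le> \<phi> w"
    and L: "L > 0"
    and sm: "\<And>w. w \<in> X \<Longrightarrow> \<phi> w \<le> \<phi> z + g \<bullet> (w - z) + L / 2 * (norm (w - z))\<^sup>2"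
  shows "g \<bullet> (v - z) \<ge> 0"
proof (rule ccontr)
  assume neg: "\<not> g \<bullet> (v - z) \<ge> 0"
  define d where "d = v - z"
  define a where "a = g \<bullet> d"
  define nd where "nd = (norm d)\<^sup>2"
  have a: "a < 0" using neg by (simp add: a_def d_def)
  have "d \<noteq> 0" using a by (auto simp: a_def)
  hence nd: "nd > 0" by (simp add: nd_def)
  define s where "s = min 1 (- a / (L * nd))"
  have s0: "s > 0" using a nd L by (simp add: s_def field_simps)
  have s1: "s \<le> 1" by (simp add: s_def)
  have sle: "L * s * nd \<le> - a" using nd L unfolding s_def
    by (smt (verit, best) divide_pos_pos min.cobounded2 mult.commute mult_pos_pos nonzero_mult_div_cancel_left mult_left_mono times_divide_eq_right)
  have w: "z + s *\<^sub>R d \<in> X"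
  proof -
    have "(1 - s) *\<^sub>R z + s *\<^sub>R v \<in> X" using cX z v s0 s1 by (simp add: convex_def)
    moreover have "(1 - s) *\<^sub>R z + s *\<^sub>R v = z + s *\<^sub>R d" by (simp add: d_def algebra_simps)
    ultimately show ?thesis by simp
  qed
  have "\<phi> z \<le> \<phi> (z + s *\<^sub>R d)" using zmin w by blast
  also have "\<dots> \<le> \<phi> z + g \<bullet> (s *\<^sub>R d) + L / 2 * (norm (s *\<^sub>R d))\<^sup>2" using sm[OF w] by simp
  also have "\<dots> = \<phi> z + s * a + L / 2 * s\<^sup>2 * nd"
    using s0 by (simp add: a_def nd_def power_mult_distrib)
  finally have "0 \<le> s * (a + L / 2 * s * nd)" by (simp add: power2_eq_square algebra_simps)
  hence "0 \<le> a + L / 2 * s * nd" using s0 by (simp add: zero_le_mult_iff)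
  thus False using sle a by linarith
qed

lemma contract:
  fixes \<phi> :: "'a::euclidean_space \<Rightarrow> real"
  assumes cX: "convex X" and clX: "closed X" and x: "x \<in> X" and z: "z \<in> X"
    and ydef: "y = closest_point X (x - \<eta> *\<^sub>R g)"
    and sm: "\<phi> y \<le> \<phi> x + g \<bullet> (y - x) + L / 2 * (norm (y - x))\<^sup>2"
    and st: "\<phi> z \<ge> \<phi> x + g \<bullet> (z - x) + lam / 2 * (norm (z - x))\<^sup>2"
    and stz: "\<phi> y \<ge> \<phi> z + lam / 2 * (norm (y - z))\<^sup>2"
    and eta: "\<eta> > 0" "\<eta> * L \<le> 1" and L: "L > 0"
  shows "(1 + \<eta> * lam) * (norm (y - z))\<^sup>2 \<le> (1 - \<eta> * lam) * (norm (x - z))\<^sup>2"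
proof -
  have P: "(x - \<eta> *\<^sub>R g - y) \<bullet> (z - y) \<le> 0"
    using closest_point_dot[OF cX clX z, of "x - \<eta> *\<^sub>R g"] ydef by simp
  define a where "a = x - y"
  define b where "b = y - z"
  have P2: "\<eta> * (g \<bullet> b) \<le> a \<bullet> b"
    using P by (simp add: a_def b_def inner_diff_left inner_diff_right algebra_simps)
  have Lle: "L / 2 * (norm (y - x))\<^sup>2 \<le> 1 / (2 * \<eta>) * (norm a)\<^sup>2"
  proof -
    have "L \<le> 1 / \<eta>" using eta by (simp add: field_simps)
    moreover have "norm (y - x) = norm a" by (simp add: a_def norm_minus_commute)
    moreover have "L * (norm a)\<^sup>2 \<le> 1 / \<eta> * (norm a)\<^sup>2"
      using mult_right_mono[OF \<open>L \<le> 1 / \<eta>\<close>, of "(norm a)\<^sup>2"] by simp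
    ultimately show ?thesis using eta by (simp add: field_simps)
  qed
  have key: "lam / 2 * (norm b)\<^sup>2 \<le> g \<bullet> b + 1 / (2 * \<eta>) * (norm a)\<^sup>2 - lam / 2 * (norm (a + b))\<^sup>2"
  proof -
    have e1: "g \<bullet> (y - x) - g \<bullet> (z - x) = g \<bullet> b" by (simp add: b_def inner_diff_right)
    have e2: "norm (z - x) = norm (a + b)" by (simp add: a_def b_def norm_minus_commute)
    have e3: "norm (y - z) = norm b" by (simp add: b_def)
    show ?thesis using sm st[unfolded e2] stz[unfolded e3] Lle e1 by linarith
  qed
  have expand: "(norm (a + b))\<^sup>2 = (norm a)\<^sup>2 + 2 * (a \<bullet> b) + (norm b)\<^sup>2"
    by (simp add: power2_norm_eq_inner inner_add_left inner_add_right inner_commute)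
  from key have "\<eta> * lam * (norm b)\<^sup>2 \<le> 2 * (\<eta> * (g \<bullet> b)) + (norm a)\<^sup>2 - \<eta> * lam * (norm (a + b))\<^sup>2"
    using eta by (simp add: field_simps)
  also have "\<dots> \<le> 2 * (a \<bullet> b) + (norm a)\<^sup>2 - \<eta> * lam * (norm (a + b))\<^sup>2" using P2 by simp
  also have "\<dots> = (norm (a + b))\<^sup>2 - (norm b)\<^sup>2 - \<eta> * lam * (norm (a + b))\<^sup>2" using expand by simp
  finally have "(1 + \<eta> * lam) * (norm b)\<^sup>2 \<le> (1 - \<eta> * lam) * (norm (a + b))\<^sup>2"
    by (simp add: algebra_simps)
  moreover have "a + b = x - z" by (simp add: a_def b_def)
  ultimately show ?thesis unfolding b_def by metis
qed


lemma exists_min: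
  fixes \<phi> :: "'a::euclidean_space \<Rightarrow> real"
  assumes clX: "closed X" and ne: "X \<noteq> {}" and cont: "continuous_on UNIV \<phi>" and lam: "lam > 0"
    and st: "\<And>u v. u \<in> X \<Longrightarrow> v \<in> X \<Longrightarrow> \<phi> v \<ge> \<phi> u + g u \<bullet> (v - u) + lam / 2 * (norm (v - u))\<^sup>2"
  shows "\<exists>z\<in>X. \<forall>y\<in>X. \<phi> z \<le> \<phi> y"
proof -
  obtain a where a: "a \<in> X" using ne by blast
  define K where "K = X \<inter> {v. \<phi> v \<le> \<phi> a}"
  have "closed {v. \<phi> v \<le> \<phi> a}"
    using closed_Collect_le[OF cont continuous_on_const] by simp
  hence clK: "closed K" using clX by (simp add: K_def closed_Int)
  have "K \<subseteq> cball a (2 * norm (g a) / lam)"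
  proof
    fix v assume v: "v \<in> K"
    define n where "n = norm (v - a)"
    have "\<phi> v \<le> \<phi> a" "v \<in> X" using v by (auto simp: K_def)
    moreover have "g a \<bullet> (v - a) \<ge> - (norm (g a) * n)"
      using norm_cauchy_schwarz[of "- g a" "v - a"] by (simp add: n_def)
    ultimately have "lam / 2 * n\<^sup>2 \<le> norm (g a) * n" using st[OF a, of v] by (simp add: n_def)
    hence "lam / 2 * n * n \<le> norm (g a) * n" by (simp add: power2_eq_square)
    moreover have "n \<ge> 0" by (simp add: n_def)
    ultimately have "lam / 2 * n \<le> norm (g a)"
    proof (cases "n = 0")
      case False
      with \<open>n \<ge> 0\<close> have "n > 0" by simp
      thus ?thesis using \<open>lam / 2 * n * n \<le> norm (g a) * n\<close> mult_right_le_imp_le by blast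
    qed simp
    hence "n \<le> 2 * norm (g a) / lam" using lam by (simp add: field_simps)
    thus "v \<in> cball a (2 * norm (g a) / lam)" by (simp add: n_def dist_norm norm_minus_commute)
  qed
  hence "bounded K" using bounded_cball bounded_subset by blast
  hence cK: "compact K" using clK by (simp add: compact_eq_bounded_closed)
  have "a \<in> K" using a by (simp add: K_def)
  then obtain z where z: "z \<in> K" "\<forall>y\<in>K. \<phi> z \<le> \<phi> y"
    using continuous_attains_inf[OF cK _ continuous_on_subset[OF cont]] by blast
  show ?thesis
  proof (intro bexI ballI)
    fix y assume y: "y \<in> X"
    show "\<phi> z \<le> \<phi> y"
    proof (cases "\<phi> y \<le> \<phi> a")
      case True thus ?thesis using z y by (simp add: K_def)
    next
      case False thus ?thesis using z \<open>a \<in> K\<close> by force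
    qed
  qed (use z in \<open>simp add: K_def\<close>)
qed

lemma lin_div:
  fixes G a c P k1 k2 R d :: real
  shows "G * ((a + c * P + k1 * k2 * R) / d) = G * a / d + G * c / d * P + G * k1 * k2 / d * R"
  by (cases "d = 0") (simp_all add: field_simps)

theorem theorem1:
  fixes X :: "(real ^ 'n) set" and \<Theta> :: "(real ^ 'm) set"
    and f :: "real ^ 'n \<Rightarrow> real ^ 'm \<Rightarrow> real"
    and gf :: "real ^ 'n \<Rightarrow> real ^ 'm \<Rightarrow> real ^ 'n"
    and G L lam C\<theta> \<eta> :: real
    and T :: nat
    and \<theta> \<theta>h :: "nat \<Rightarrow> real ^ 'm"
    and x :: "nat \<Rightarrow> real ^ 'n"
  assumes X_ne: "X \<noteq> {}" and X_closed: "closed X" and X_convex: "convex X"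
    and grad: "\<And>z p. ((\<lambda>y. f y p) has_derivative (\<lambda>h. gf z p \<bullet> h)) (at z)"
    and cvx: "\<And>p. convex_on UNIV (\<lambda>y. f y p)"
    and A1: "G > 0" "\<And>u v p. u \<in> X \<Longrightarrow> v \<in> X \<Longrightarrow> p \<in> \<Theta> \<Longrightarrow> \<bar>f u p - f v p\<bar> \<le> G * norm (u - v)"
    and A2: "L > 0" "\<And>u v p. u \<in> X \<Longrightarrow> v \<in> X \<Longrightarrow> p \<in> \<Theta> \<Longrightarrow>
               f v p \<le> f u p + gf u p \<bullet> (v - u) + L / 2 * (norm (v - u))\<^sup>2"
    and A3: "lam > 0" "\<And>u v p. u \<in> X \<Longrightarrow> v \<in> X \<Longrightarrow> p \<in> \<Theta> \<Longrightarrow>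
               f v p \<ge> f u p + gf u p \<bullet> (v - u) + lam / 2 * (norm (v - u))\<^sup>2"
    and A4: "C\<theta> > 0" "\<And>u p q. u \<in> X \<Longrightarrow> p \<in> \<Theta> \<Longrightarrow> q \<in> \<Theta> \<Longrightarrow>
               norm (gf u p - gf u q) \<le> C\<theta> * norm (p - q)"
    and theta_in: "\<And>t. 1 \<le> t \<Longrightarrow> t \<le> T \<Longrightarrow> \<theta> t \<in> \<Theta>"
    and thetah_in: "\<And>t. 2 \<le> t \<Longrightarrow> t \<le> T \<Longrightarrow> \<theta>h t \<in> \<Theta>"
    and eta_pos: "\<eta> > 0" and eta_le: "\<eta> \<le> 1 / L"
    and x1: "x 1 \<in> X"
    and x_step: "\<And>t. 1 \<le> t \<Longrightarrow> t \<le> T - 1 \<Longrightarrow>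
                   x (Suc t) = closest_point X (x t - \<eta> *\<^sub>R gf (x t) (\<theta>h (Suc t)))"
  shows "sqrt (1 - 2 * lam * \<eta> / (1 + \<eta> * lam)) < 1 \<and>
         dyn_regret X f \<theta> x T
           \<le> G * norm (x 1 - argmin_on X (\<lambda>y. f y (\<theta> 1)))
                 / (1 - sqrt (1 - 2 * lam * \<eta> / (1 + \<eta> * lam)))
             + G * sqrt (1 - 2 * lam * \<eta> / (1 + \<eta> * lam))
                 / (1 - sqrt (1 - 2 * lam * \<eta> / (1 + \<eta> * lam))) * path_length X f \<theta> T
             + G * \<eta> * C\<theta> / (1 - sqrt (1 - 2 * lam * \<eta> / (1 + \<eta> * lam)))
                 * pred_regularity \<theta> \<theta>h T"
proof -
  define Cc where "Cc = sqrt (1 - 2 * lam * \<eta> / (1 + \<eta> * lam))"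
  define xs where "xs t = argmin_on X (\<lambda>y. f y (\<theta> t))" for t
  define e where "e t = norm (x t - xs t)" for t
  define pp where "pp t = norm (xs t - xs (Suc t))" for t
  define r where "r t = norm (\<theta> t - \<theta>h t)" for t
  define S where "S = (\<Sum>t=1..T. e t)"
  define P where "P = path_length X f \<theta> T"
  define R where "R = pred_regularity \<theta> \<theta>h T"
  have P_eq: "P = (\<Sum>t\<in>{1..<T}. pp t)" by (simp add: P_def path_length_def pp_def xs_def)
  have R_eq: "R = (\<Sum>t=2..T. r t)" by (simp add: R_def pred_regularity_def r_def)
  have lampos: "lam > 0" using A3(1) .
  have Cc1: "Cc < 1"
  proof -
    have "2 * lam * \<eta> / (1 + \<eta> * lam) > 0" using lampos eta_pos by (intro divide_pos_pos) (simp_all add: add_pos_pos)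
    hence "1 - 2 * lam * \<eta> / (1 + \<eta> * lam) < 1" by simp
    thus ?thesis unfolding Cc_def by simp
  qed
  have cont: "continuous_on UNIV (\<lambda>y. f y p)" for p
    using grad[where p=p] has_derivative_continuous continuous_at_imp_continuous_on by blast
  have exmin: "\<exists>z\<in>X. \<forall>y\<in>X. f z p \<le> f y p" if "p \<in> \<Theta>" for p
    using exists_min[OF X_closed X_ne cont lampos, where g="\<lambda>u. gf u p"] A3(2) that by blast
  have xs_prop: "xs t \<in> X \<and> (\<forall>y\<in>X. f (xs t) (\<theta> t) \<le> f y (\<theta> t))" if "1 \<le> t" "t \<le> T" for t
  proof -
    have "\<exists>z. z \<in> X \<and> (\<forall>y\<in>X. f z (\<theta> t) \<le> f y (\<theta> t))" using exmin theta_in that by blast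
    hence "argmin_on X (\<lambda>y. f y (\<theta> t)) \<in> X \<and> (\<forall>y\<in>X. f (argmin_on X (\<lambda>y. f y (\<theta> t))) (\<theta> t) \<le> f y (\<theta> t))"
      unfolding argmin_on_def by (rule someI_ex)
    thus ?thesis by (simp add: xs_def)
  qed
  have x_in_all: "\<forall>t. 1 \<le> t \<longrightarrow> t \<le> T \<longrightarrow> x t \<in> X"
  proof
    fix t show "1 \<le> t \<longrightarrow> t \<le> T \<longrightarrow> x t \<in> X"
    proof (induction t)
      case 0 show ?case by simp
    next
      case (Suc k)
      show ?case
      proof (cases "k = 0")
        case True thus ?thesis using x1 by simp
      next
        case False
        show ?thesis
        proof (intro impI)
          assume "Suc k \<le> T"
          hence "x (Suc k) = closest_point X (x k - \<eta> *\<^sub>R gf (x k) (\<theta>h (Suc k)))"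
            using x_step[of k] False by simp
          thus "x (Suc k) \<in> X" using closest_point_in_set[OF X_closed X_ne] by simp
        qed
      qed
    qed
  qed
  hence x_in: "x t \<in> X" if "1 \<le> t" "t \<le> T" for t using that by blast
  have e_nn: "e t \<ge> 0" for t by (simp add: e_def)
  have reg_le: "dyn_regret X f \<theta> x T \<le> G * S"
  proof -
    have "dyn_regret X f \<theta> x T = (\<Sum>t=1..T. f (x t) (\<theta> t) - f (xs t) (\<theta> t))"
      unfolding dyn_regret_def
    proof (rule sum.cong[OF refl])
      fix t assume "t \<in> {1..T}"
      hence "xs t \<in> X" "\<forall>y\<in>X. f (xs t) (\<theta> t) \<le> f y (\<theta> t)" using xs_prop by auto
      hence "Inf ((\<lambda>y. f y (\<theta> t)) ` X) = f (xs t) (\<theta> t)"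
        by (intro cInf_eq_minimum) auto
      thus "f (x t) (\<theta> t) - Inf ((\<lambda>y. f y (\<theta> t)) ` X) = f (x t) (\<theta> t) - f (xs t) (\<theta> t)" by simp
    qed
    also have "\<dots> \<le> (\<Sum>t=1..T. G * e t)"
    proof (rule sum_mono)
      fix t assume "t \<in> {1..T}"
      hence "x t \<in> X" "xs t \<in> X" "\<theta> t \<in> \<Theta>" using x_in xs_prop theta_in by auto
      thus "f (x t) (\<theta> t) - f (xs t) (\<theta> t) \<le> G * e t"
        using A1(2)[of "x t" "xs t" "\<theta> t"] by (simp add: e_def)
    qed
    also have "\<dots> = G * S" by (simp add: S_def sum_distrib_left)
    finally show ?thesis .
  qed
  have R_nn: "R \<ge> 0" unfolding R_eq r_def by (simp add: sum_nonneg)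
  have den: "1 - Cc > 0" using Cc1 by simp
  show ?thesis
  proof (cases "T \<ge> 1 \<and> (\<exists>u\<in>X. \<exists>v\<in>X. u \<noteq> v)")
    case False
    have S0: "S = 0" and P0: "P = 0"
    proof -
      have "S = 0 \<and> P = 0"
      proof (cases "T \<ge> 1")
        case False
        hence "T = 0" by simp
        thus ?thesis by (simp add: S_def P_eq)
      next
        case True
        with \<open>\<not> (T \<ge> 1 \<and> (\<exists>u\<in>X. \<exists>v\<in>X. u \<noteq> v))\<close> have sing: "\<And>u v. u \<in> X \<Longrightarrow> v \<in> X \<Longrightarrow> u = v" by blast
        have "e t = 0" if "t \<in> {1..T}" for t using sing[of "x t" "xs t"] x_in xs_prop that by (auto simp: e_def)
        moreover have "pp t = 0" if "t \<in> {1..<T}" for t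
          using sing[of "xs t" "xs (Suc t)"] xs_prop that by (auto simp: pp_def)
        ultimately show ?thesis by (simp add: S_def P_eq)
      qed
      thus "S = 0" "P = 0" by auto
    qed
    have "dyn_regret X f \<theta> x T \<le> 0" using reg_le S0 by simp
    also have "0 \<le> G * norm (x 1 - argmin_on X (\<lambda>y. f y (\<theta> 1))) / (1 - Cc)
             + G * Cc / (1 - Cc) * P + G * \<eta> * C\<theta> / (1 - Cc) * R"
      using P0 R_nn den A1(1) eta_pos A4(1) by simp
    finally show ?thesis using Cc1 unfolding Cc_def P_def R_def by simp
  next
    case True
    then obtain u v where uv: "u \<in> X" "v \<in> X" "u \<noteq> v" and T1: "T \<ge> 1" by blast
    have th1: "\<theta> 1 \<in> \<Theta>" using theta_in T1 by simp
    have "lam \<le> L"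
    proof -
      have n: "(norm (v - u))\<^sup>2 > 0" using uv by simp
      have "lam / 2 * (norm (v - u))\<^sup>2 \<le> L / 2 * (norm (v - u))\<^sup>2"
        using A2(2)[OF uv(1,2) th1] A3(2)[OF uv(1,2) th1] by linarith
      thus ?thesis using n by simp
    qed
    have etaL: "\<eta> * L \<le> 1" using eta_le A2(1) by (simp add: field_simps)
    have "\<eta> * lam \<le> \<eta> * L" using \<open>lam \<le> L\<close> eta_pos by (simp add: mult_left_mono)
    hence etalam: "\<eta> * lam \<le> 1" using etaL by linarith
    have hpos: "1 + \<eta> * lam > 0" using lampos eta_pos by (simp add: add_pos_pos)
    have Cc2: "Cc\<^sup>2 = (1 - \<eta> * lam) / (1 + \<eta> * lam)" and Cc0: "Cc \<ge> 0"
    proof -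
      have q: "1 - 2 * lam * \<eta> / (1 + \<eta> * lam) = (1 - \<eta> * lam) / (1 + \<eta> * lam)"
      proof -
        have "1 + \<eta> * lam > 0" using lampos eta_pos by (simp add: add_pos_pos)
        thus ?thesis by (simp add: field_simps)
      qed
      have "(1 - \<eta> * lam) / (1 + \<eta> * lam) \<ge> 0" using etalam lampos eta_pos by simp
      thus "Cc\<^sup>2 = (1 - \<eta> * lam) / (1 + \<eta> * lam)" "Cc \<ge> 0" unfolding Cc_def q by simp_all
    qed
    have recur: "e (Suc t) \<le> Cc * e t + Cc * pp t + \<eta> * C\<theta> * r (Suc t)" if t: "1 \<le> t" "t < T" for t
    proof -
      define p' where "p' = \<theta> (Suc t)"
      define y where "y = closest_point X (x t - \<eta> *\<^sub>R gf (x t) p')"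
      define z where "z = xs (Suc t)"
      have p': "p' \<in> \<Theta>" using theta_in t by (simp add: p'_def)
      have ph: "\<theta>h (Suc t) \<in> \<Theta>" using thetah_in t by simp
      have xt: "x t \<in> X" using x_in t by simp
      have y: "y \<in> X" using closest_point_in_set[OF X_closed X_ne] by (simp add: y_def)
      have z: "z \<in> X" and zmin: "\<forall>w\<in>X. f z p' \<le> f w p'" using xs_prop[of "Suc t"] t by (auto simp: z_def p'_def)
      have opt: "gf z p' \<bullet> (y - z) \<ge> 0"
      proof -
        have smz: "\<And>w. w \<in> X \<Longrightarrow> f w p' \<le> f z p' + gf z p' \<bullet> (w - z) + L / 2 * (norm (w - z))\<^sup>2"
          using A2(2)[OF z _ p'] by blast
        show ?thesis
          by (rule opt_cond[where \<phi>="\<lambda>w. f w p'", OF X_convex z y zmin A2(1) smz])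
      qed
      have stz: "f y p' \<ge> f z p' + lam / 2 * (norm (y - z))\<^sup>2"
        using A3(2)[OF z y p'] opt by linarith
      have con: "(1 + \<eta> * lam) * (norm (y - z))\<^sup>2 \<le> (1 - \<eta> * lam) * (norm (x t - z))\<^sup>2"
        by (rule contract[where \<phi>="\<lambda>w. f w p'" and g="gf (x t) p'" and lam=lam and L=L and \<eta>=\<eta>,
              OF X_convex X_closed xt z y_def A2(2)[OF xt y p'] A3(2)[OF xt z p'] stz eta_pos etaL A2(1)])
      have "(norm (y - z))\<^sup>2 \<le> ((1 - \<eta> * lam) * (norm (x t - z))\<^sup>2) / (1 + \<eta> * lam)"
        unfolding pos_le_divide_eq[OF hpos] using con by (simp only: mult.commute)
      also have "\<dots> = Cc\<^sup>2 * (norm (x t - z))\<^sup>2" unfolding Cc2 by simp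
      also have "\<dots> = (Cc * norm (x t - z))\<^sup>2" by (simp only: power_mult_distrib)
      finally have sq: "(norm (y - z))\<^sup>2 \<le> (Cc * norm (x t - z))\<^sup>2" .
      have yz: "norm (y - z) \<le> Cc * norm (x t - z)"
        by (rule power2_le_imp_le[OF sq]) (simp add: Cc0)
      have xs1: "x (Suc t) = closest_point X (x t - \<eta> *\<^sub>R gf (x t) (\<theta>h (Suc t)))"
        using x_step[of t] t by simp
      have "dist (x (Suc t)) y \<le> dist (x t - \<eta> *\<^sub>R gf (x t) (\<theta>h (Suc t))) (x t - \<eta> *\<^sub>R gf (x t) p')"
        unfolding xs1 y_def by (rule closest_point_lipschitz[OF X_convex X_closed X_ne])
      also have "\<dots> = \<eta> * norm (gf (x t) (\<theta>h (Suc t)) - gf (x t) p')"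
      proof -
        have "(x t - \<eta> *\<^sub>R gf (x t) (\<theta>h (Suc t))) - (x t - \<eta> *\<^sub>R gf (x t) p') = - (\<eta> *\<^sub>R (gf (x t) (\<theta>h (Suc t)) - gf (x t) p'))"
          by (simp add: algebra_simps)
        thus ?thesis using eta_pos by (simp add: dist_norm)
      qed
      also have "\<dots> \<le> \<eta> * (C\<theta> * norm (\<theta>h (Suc t) - p'))"
        using A4(2)[OF xt ph p'] eta_pos by (simp add: mult_left_mono)
      also have "\<dots> = \<eta> * C\<theta> * r (Suc t)" by (simp add: r_def p'_def norm_minus_commute)
      finally have xy: "norm (x (Suc t) - y) \<le> \<eta> * C\<theta> * r (Suc t)" by (simp add: dist_norm)
      have tri1: "e (Suc t) \<le> norm (x (Suc t) - y) + norm (y - z)"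
        using norm_triangle_ineq[of "x (Suc t) - y" "y - z"] by (simp add: e_def z_def)
      have tri2: "norm (x t - z) \<le> e t + pp t"
        using norm_triangle_ineq[of "x t - xs t" "xs t - xs (Suc t)"] by (simp add: e_def pp_def z_def)
      have "Cc * norm (x t - z) \<le> Cc * (e t + pp t)" using tri2 Cc0 by (rule mult_left_mono)
      thus ?thesis using xy yz tri1 by (simp add: distrib_left)
    qed
    have split: "S = e 1 + (\<Sum>t\<in>{1..<T}. e (Suc t))"
    proof -
      have "S = e 1 + (\<Sum>t=Suc 1..T. e t)" unfolding S_def using T1 by (simp add: sum.atLeast_Suc_atMost)
      also have "(\<Sum>t=Suc 1..T. e t) = (\<Sum>t\<in>{Suc 1..<Suc T}. e t)" by (simp add: atLeastLessThanSuc_atLeastAtMost)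
      also have "\<dots> = (\<Sum>t\<in>{1..<T}. e (Suc t))" by (rule sum.shift_bounds_Suc_ivl)
      finally show ?thesis .
    qed
    have Rsplit: "R = (\<Sum>t\<in>{1..<T}. r (Suc t))"
    proof -
      have "R = (\<Sum>t\<in>{Suc 1..<Suc T}. r t)" unfolding R_eq by (simp add: atLeastLessThanSuc_atLeastAtMost numeral_2_eq_2)
      also have "\<dots> = (\<Sum>t\<in>{1..<T}. r (Suc t))" by (rule sum.shift_bounds_Suc_ivl)
      finally show ?thesis .
    qed
    have "(\<Sum>t\<in>{1..<T}. e (Suc t)) \<le> (\<Sum>t\<in>{1..<T}. Cc * e t + Cc * pp t + \<eta> * C\<theta> * r (Suc t))"
      using recur by (intro sum_mono) auto
    also have "\<dots> = Cc * (\<Sum>t\<in>{1..<T}. e t) + Cc * P + \<eta> * C\<theta> * R"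
      by (simp add: sum.distrib sum_distrib_left P_eq Rsplit)
    also have "(\<Sum>t\<in>{1..<T}. e t) \<le> S"
      unfolding S_def by (rule sum_mono2) (auto simp: e_nn)
    hence "Cc * (\<Sum>t\<in>{1..<T}. e t) \<le> Cc * S" using Cc0 by (simp add: mult_left_mono)
    finally have "(\<Sum>t\<in>{1..<T}. e (Suc t)) \<le> Cc * S + Cc * P + \<eta> * C\<theta> * R" by simp
    hence "(1 - Cc) * S \<le> e 1 + Cc * P + \<eta> * C\<theta> * R" using split by (simp add: algebra_simps)
    hence Sle: "S \<le> (e 1 + Cc * P + \<eta> * C\<theta> * R) / (1 - Cc)"
      unfolding pos_le_divide_eq[OF den] by (simp add: mult.commute)
    have "G * S \<le> G * ((e 1 + Cc * P + \<eta> * C\<theta> * R) / (1 - Cc))"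
      by (rule mult_left_mono[OF Sle]) (use A1(1) in simp)
    also have "\<dots> = G * e 1 / (1 - Cc) + G * Cc / (1 - Cc) * P + G * \<eta> * C\<theta> / (1 - Cc) * R"
      by (rule lin_div)
    finally have "dyn_regret X f \<theta> x T \<le> G * e 1 / (1 - Cc) + G * Cc / (1 - Cc) * P + G * \<eta> * C\<theta> / (1 - Cc) * R"
      using reg_le by linarith
    thus ?thesis using Cc1 unfolding Cc_def P_def R_def e_def xs_def by simp
  qed
qed

end
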